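(* Let $q\ge2$ and let $f\colon\mathbb{N}_0\to\mathbb{U}$ be strongly $q$-multiplicative. Then either there exists an integer $0\le p<q-1$ such that $f(n)=e(np/(q-1))$ for all $n\in\mathbb{N}_0$, or $f$ is of Gelfond type of order $1$, i.e. there exists $\gamma<1$ such that $$\sup_{\alpha\in\mathbb{R}}\Big|\sum_{n=0}^{N-1}f(n)e(\alpha n)\Big|\ll N^{\gamma}\qquad(N\ge1).$$
   Context: $\mathbb{N}_0=\{0,1,\dots\}$, $\mathbb{U}=\{z\in\mathbb{C}:|z|=1\}$, $e(t)=e^{2\pi i t}$. $f$ is $q$-multiplicative if $f(m+n)=f(m)f(n)$ whenever $t,m,n\ge0$, $m<q^t$, $q^t\mid n$; it is strongly $q$-multiplicative if moreover $f(qn)=f(n)$ for all $n\in\mathbb{N}_0$. $X\ll Y$ means $|X|\le CY$ with $C$ independent of $N$. *)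

theory Defs
  imports Complex_Main
begin

definition e :: "real \<Rightarrow> complex" where
  "e t = exp (2 * of_real pi * \<i> * of_real t)"

definition q_multiplicative :: "nat \<Rightarrow> (nat \<Rightarrow> complex) \<Rightarrow> bool" where
  "q_multiplicative q f \<longleftrightarrow>
     (\<forall>t m n. m < q ^ t \<and> q ^ t dvd n \<longrightarrow> f (m + n) = f m * f n)"

definition strongly_q_multiplicative :: "nat \<Rightarrow> (nat \<Rightarrow> complex) \<Rightarrow> bool" where
  "strongly_q_multiplicative q f \<longleftrightarrow>
     q_multiplicative q f \<and> (\<forall>n. f (q * n) = f n)"

definition gelfond_type_order1 :: "(nat \<Rightarrow> complex) \<Rightarrow> bool" where
  "gelfond_type_order1 f \<longleftrightarrow>
     (\<exists>\<gamma>::real. \<gamma> < 1 \<and> (\<exists>C::real. \<forall>N::nat. N \<ge> 1 \<longrightarrow>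
        (\<forall>\<alpha>::real. norm (\<Sum>n<N. f n * e (\<alpha> * real n)) \<le> C * real N powr \<gamma>)))"

end

theory Submission imports Defs "HOL-Analysis.Complex_Transcendental" begin

lemma e_add: "e (a + b) = e a * e b"
  unfolding e_def by (simp add: distrib_left exp_add[symmetric])

lemma e_norm [simp]: "norm (e t) = 1"
  unfolding e_def by (simp add: norm_exp_eq_Re)

lemma e_zero [simp]: "e 0 = 1"
  unfolding e_def by simp

lemma e_int [simp]: "e (of_int k) = 1"
proof -
  have "2 * of_real pi * \<i> * of_real (of_int k) = \<i> * (of_int k * (of_real pi * 2))"
    by simp
  then show ?thesis unfolding e_def by (metis exp_2pi_1_int)
qed

lemma e_nonzero [simp]: "e t \<noteq> 0"
  by (metis e_norm norm_zero zero_neq_one)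

lemma e_eq_1: assumes "e t = 1" shows "\<exists>k::int. t = of_int k"
proof -
  from assms have "exp (2 * of_real pi * \<i> * of_real t) = 1" unfolding e_def .
  then obtain n :: int where "Im (2 * of_real pi * \<i> * of_real t) = of_int (2 * n) * pi"
    by (auto simp: exp_eq_1)
  then have "2 * pi * t = 2 * of_int n * pi" by simp
  then have "t = of_int n" using pi_gt_zero by (simp add: field_simps)
  then show ?thesis by blast
qed

lemma e_continuous: "continuous_on A (g :: real \<Rightarrow> real) \<Longrightarrow> continuous_on A (\<lambda>x. e (g x))"
  unfolding e_def by (intro continuous_intros)

lemma prod_lt:
  fixes a b c :: real
  assumes "0 \<le> a" "0 \<le> b" "a \<le> c" "b \<le> c" "a < c \<or> b < c"
  shows "a * b < c * c"
proof (cases "a < c")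
  case True
  have "a * b \<le> a * c" using assms by (intro mult_left_mono) auto
  also have "\<dots> < c * c" using True assms by (intro mult_strict_right_mono) auto
  finally show ?thesis .
next
  case False
  then have "b < c" using assms by auto
  have "a * b \<le> c * b" using assms by (intro mult_right_mono) auto
  also have "\<dots> < c * c" using \<open>b < c\<close> assms by (intro mult_strict_left_mono) auto
  finally show ?thesis .
qed

lemma div_aux: "(c::real) \<noteq> 0 \<Longrightarrow> x * a / c + b / c * x = x * (a + b) / c"
  by (simp add: field_simps)

definition U :: "(nat \<Rightarrow> complex) \<Rightarrow> nat \<Rightarrow> real \<Rightarrow> complex" where
  "U f N \<alpha> = (\<Sum>n<N. f n * e (\<alpha> * real n))"

definition S :: "(nat \<Rightarrow> complex) \<Rightarrow> nat \<Rightarrow> real \<Rightarrow> complex" where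
  "S f q \<beta> = (\<Sum>d<q. f d * e (\<beta> * real d))"

lemma sum_split_lt: "(\<Sum>n<a+(b::nat). h n) = (\<Sum>n<a. h n) + (\<Sum>d<b. h (a + d))"
  by (induction b) (auto simp: add.assoc)

lemma U_mult:
  assumes fdig: "\<And>d m. d < q \<Longrightarrow> f (d + q * m) = f d * f m"
  shows "U f (q * M) \<alpha> = S f q \<alpha> * U f M (q * \<alpha>)"
proof (induction M)
  case 0
  then show ?case by (simp add: U_def)
next
  case (Suc M)
  have eq: "q * Suc M = q * M + q" by simp
  have "U f (q * Suc M) \<alpha> = U f (q * M) \<alpha> + (\<Sum>d<q. f (q * M + d) * e (\<alpha> * real (q * M + d)))"
    unfolding U_def by (simp only: eq sum_split_lt)
  also have "(\<Sum>d<q. f (q * M + d) * e (\<alpha> * real (q * M + d)))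
      = (\<Sum>d<q. (f d * e (\<alpha> * real d)) * (f M * e (real q * \<alpha> * real M)))"
  proof (rule sum.cong)
    fix d assume "d \<in> {..<q}"
    then have "f (q * M + d) = f d * f M" using fdig[of d M] by (simp add: add.commute)
    moreover have "e (\<alpha> * real (q * M + d)) = e (\<alpha> * real d) * e (real q * \<alpha> * real M)"
      by (simp add: e_add[symmetric] algebra_simps)
    ultimately show "f (q * M + d) * e (\<alpha> * real (q * M + d)) = (f d * e (\<alpha> * real d)) * (f M * e (real q * \<alpha> * real M))"
      by simp
  qed simp
  also have "\<dots> = S f q \<alpha> * (f M * e (real q * \<alpha> * real M))"
    unfolding S_def by (simp add: sum_distrib_right)
  finally show ?case using Suc by (simp add: U_def distrib_left)
qed

lemma S_periodic: "S f q (\<beta> + of_int k) = S f q \<beta>"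
  unfolding S_def
proof (rule sum.cong)
  fix d assume "d \<in> {..<q}"
  have "(\<beta> + of_int k) * real d = \<beta> * real d + of_int (k * int d)" by (simp add: algebra_simps)
  then show "f d * e ((\<beta> + of_int k) * real d) = f d * e (\<beta> * real d)" by (simp only: e_add e_int mult_1_right)
qed simp

lemma norm_S_le: assumes "\<And>n. norm (f n) = 1" shows "norm (S f q \<beta>) \<le> q"
proof -
  have "norm (S f q \<beta>) \<le> (\<Sum>d<q. norm (f d * e (\<beta> * real d)))" unfolding S_def by (rule norm_sum)
  also have "\<dots> = q" by (simp add: norm_mult assms)
  finally show ?thesis .
qed

lemma norm_U_le: assumes "\<And>n. norm (f n) = 1" shows "norm (U f N \<beta>) \<le> N"
proof -
  have "norm (U f N \<beta>) \<le> (\<Sum>d<N. norm (f d * e (\<beta> * real d)))" unfolding U_def by (rule norm_sum)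
  also have "\<dots> = N" by (simp add: norm_mult assms)
  finally show ?thesis .
qed

lemma unit_re1: fixes u :: complex assumes "norm u = 1" "Re u = 1" shows "u = 1"
proof -
  have "(Re u)^2 + (Im u)^2 = 1" using assms(1) by (simp add: cmod_def)
  then have "Im u = 0" using assms(2) by simp
  then show ?thesis using assms(2) by (simp add: complex_eq_iff)
qed

lemma all_eq_of_norm:
  fixes z :: "nat \<Rightarrow> complex"
  assumes nz: "\<And>d. norm (z d) = 1" and q: "q \<ge> 1" and s: "norm (\<Sum>d<q. z d) = q"
  shows "\<And>d. d < q \<Longrightarrow> z d = z 0"
proof -
  define s where "s = (\<Sum>d<q. z d)"
  define w where "w = s / of_nat q"
  have nw: "norm w = 1" using s q unfolding w_def s_def by (simp add: norm_divide)
  have "(\<Sum>d<q. Re (z d * cnj w)) = Re (s * cnj w)"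
    unfolding s_def by (simp add: sum_distrib_right Re_sum)
  also have "s * cnj w = of_real ((norm s)^2 / q)"
    unfolding w_def using complex_norm_square[of s] by (simp add: complex_cnj_divide)
  also have "Re \<dots> = q" using s q unfolding s_def by (simp add: power2_eq_square)
  finally have sumre: "(\<Sum>d<q. Re (z d * cnj w)) = q" .
  have le: "Re (z d * cnj w) \<le> 1" for d
    using complex_Re_le_cmod[of "z d * cnj w"] nz nw by (simp add: norm_mult)
  have "(\<Sum>d<q. 1 - Re (z d * cnj w)) = 0" using sumre by (simp add: sum_subtractf)
  moreover have nn: "\<And>d. d\<in>{..<q} \<Longrightarrow> 0 \<le> 1 - Re (z d * cnj w)" using le by (simp only: diff_ge_0_iff_ge)
  ultimately have re1: "\<forall>d\<in>{..<q}. 1 - Re (z d * cnj w) = 0"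
    using sum_nonneg_eq_0_iff[of "{..<q}" "\<lambda>d. 1 - Re (z d * cnj w)"] by blast
  have zw: "z d = w" if "d < q" for d
  proof -
    have "z d * cnj w = 1" using re1 that nz nw by (intro unit_re1) (auto simp: norm_mult)
    then have "z d * cnj w * w = w" by simp
    moreover have "cnj w * w = 1" using nw by (metis complex_norm_square mult.commute norm_one power_one of_real_1 complex_cnj_one)
    ultimately show ?thesis by (simp add: mult.assoc)
  qed
  fix d assume "d < q" then show "z d = z 0" using zw q by simp
qed

theorem proposition6p1:
  fixes q :: nat and f :: "nat \<Rightarrow> complex"
  assumes "q \<ge> 2"
    and "\<And>n. norm (f n) = 1"
    and "strongly_q_multiplicative q f"
  shows "(\<exists>p::nat. p < q - 1 \<and> (\<forall>n. f n = e (real n * real p / real (q - 1))))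
         \<or> gelfond_type_order1 f"
proof -
  note q2 = assms(1) and nf = assms(2)
  have qm: "\<And>t m n. m < q ^ t \<Longrightarrow> q ^ t dvd n \<Longrightarrow> f (m + n) = f m * f n"
    and fq: "\<And>n. f (q * n) = f n"
    using assms(3) unfolding strongly_q_multiplicative_def q_multiplicative_def by blast+
  have "f 0 = f 0 * f 0" using qm[of 0 0 0] by simp
  moreover have "f 0 \<noteq> 0" using nf[of 0] by auto
  ultimately have f0: "f 0 = 1" by simp
  have fdig: "f (d + q * m) = f d * f m" if "d < q" for d m
    using qm[of d 1 "q * m"] that fq[of m] by simp
  have Uq2: "U f (q^2 * M) \<alpha> = S f q \<alpha> * S f q (q * \<alpha>) * U f M (q^2 * \<alpha>)" for M and \<alpha> :: real
  proof -
    have "U f (q^2 * M) \<alpha> = U f (q * (q * M)) \<alpha>" by (simp add: power2_eq_square mult.assoc)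
    also have "\<dots> = S f q \<alpha> * (S f q (q * \<alpha>) * U f M (q * (q * \<alpha>)))"
      using U_mult[of q f, OF fdig] by simp
    finally show ?thesis by (simp add: power2_eq_square mult.assoc)
  qed
  define H where "H = (\<lambda>\<beta>::real. norm (S f q \<beta>) * norm (S f q (q * \<beta>)))"
  have contH: "continuous_on {0..1} H"
    unfolding H_def S_def by (intro continuous_intros e_continuous)
  obtain \<beta>0 where b0: "\<beta>0 \<in> {0..1}" and b0max: "\<And>\<beta>. \<beta> \<in> {0..1} \<Longrightarrow> H \<beta> \<le> H \<beta>0"
    using continuous_attains_sup[OF compact_Icc _ contH] by auto
  have Hper: "H (\<beta> + of_int k) = H \<beta>" for \<beta> k
  proof -
    have "q * (\<beta> + of_int k) = q * \<beta> + of_int (int q * k)" by (simp add: algebra_simps)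
    then show ?thesis unfolding H_def by (simp only: S_periodic)
  qed
  have Hmax: "H \<beta> \<le> H \<beta>0" for \<beta>
  proof -
    have "H \<beta> = H ((\<beta> - of_int (floor \<beta>)) + of_int (floor \<beta>))" by simp
    also have "\<dots> = H (\<beta> - of_int (floor \<beta>))" by (rule Hper)
    also have "\<dots> \<le> H \<beta>0" apply (rule b0max) by (simp add: less_imp_le) linarith
    finally show ?thesis .
  qed
  have Hle: "H \<beta> \<le> real q ^ 2" for \<beta>
    unfolding H_def power2_eq_square by (intro mult_mono norm_S_le nf) auto
  show ?thesis
  proof (cases "H \<beta>0 < real q ^ 2")
    case True
    define R where "R = max (H \<beta>0) (real q)"
    have R1: "1 < R" using q2 unfolding R_def by auto
    have Rq: "R < real q ^ 2" using True q2 unfolding R_def by (auto simp: power2_eq_square)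
    have q2gt1: "1 < real q ^ 2" using R1 Rq by linarith
    define \<gamma> where "\<gamma> = log (real q ^ 2) R"
    have g0: "0 < \<gamma>" unfolding \<gamma>_def using R1 q2gt1 by simp
    have g1: "\<gamma> < 1" unfolding \<gamma>_def using R1 Rq q2gt1
      by (simp add: log_less_one_cancel_iff)
    have qg: "(real q ^ 2) powr \<gamma> = R" unfolding \<gamma>_def by (rule powr_log_cancel) (use q2gt1 R1 in linarith)+
    define L where "L = real q ^ 2 / (R - 1)"
    define K where "K = real q ^ 2 + L"
    have L0: "0 \<le> L" unfolding L_def using R1 by simp
    have RL: "(R - 1) * L = real q ^ 2" unfolding L_def using R1 by simp
    have main: "\<forall>\<alpha>. norm (U f N \<alpha>) \<le> K * real N powr \<gamma> - L" if "N \<ge> 1" for N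
      using that
    proof (induction N rule: less_induct)
      case (less N)
      show ?case
      proof (cases "N < q^2")
        case True
        have "1 \<le> real N powr \<gamma>" using less.prems g0 by (simp add: ge_one_powr_ge_zero)
        then have "K * 1 \<le> K * real N powr \<gamma>" using L0 unfolding K_def by (intro mult_left_mono) auto
        then have A: "real q ^ 2 + L \<le> K * real N powr \<gamma>" unfolding K_def by simp
        have B: "real N \<le> real q ^ 2" using True by (metis less_imp_le of_nat_le_iff of_nat_power)
        show ?thesis
        proof
          fix \<alpha>
          have "norm (U f N \<alpha>) \<le> N" by (rule norm_U_le[of f, OF nf])
          then show "norm (U f N \<alpha>) \<le> K * real N powr \<gamma> - L" using A B by linarith
        qed
      next
        case False
        define M where "M = N div q^2"
        define r where "r = N mod q^2"
        have Nd: "N = q^2 * M + r" unfolding M_def r_def by simp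
        have qpos: "q^2 > 0" using q2 by simp
        have M1: "M \<ge> 1" unfolding M_def using False qpos
          by (simp add: div_greater_zero_iff Suc_le_eq)
        have MN: "M < N" unfolding M_def using q2 less.prems
          by (intro div_less_dividend) (auto simp: power2_eq_square intro: one_less_mult)
        have rq: "real r \<le> real q ^ 2" unfolding r_def using qpos
          by (metis less_imp_le mod_less_divisor of_nat_le_iff of_nat_power)
        have IH: "norm (U f M \<beta>) \<le> K * real M powr \<gamma> - L" for \<beta>
          using less.IH[OF MN M1] by blast
        have Mle: "real M \<le> real N / real q ^ 2"
          unfolding M_def using qpos using of_nat_div_le_of_nat[of N "q^2"] by simp
        have "real M powr \<gamma> \<le> (real N / real q ^ 2) powr \<gamma>"
          using Mle g0 by (intro powr_mono2) auto
        also have "\<dots> = real N powr \<gamma> / R" using qg by (simp add: powr_divide)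
        finally have MpN: "R * real M powr \<gamma> \<le> real N powr \<gamma>" using R1 by (simp add: field_simps)
        show ?thesis
        proof
          fix \<alpha>
          have "U f N \<alpha> = U f (q^2 * M) \<alpha> + (\<Sum>d<r. f (q^2 * M + d) * e (\<alpha> * real (q^2 * M + d)))"
            unfolding U_def Nd by (simp only: sum_split_lt)
          then have "norm (U f N \<alpha>) \<le> norm (U f (q^2 * M) \<alpha>) + norm (\<Sum>d<r. f (q^2 * M + d) * e (\<alpha> * real (q^2 * M + d)))"
            by (simp add: norm_triangle_ineq)
          also have "norm (\<Sum>d<r. f (q^2 * M + d) * e (\<alpha> * real (q^2 * M + d))) \<le> real r"
          proof -
            have "norm (\<Sum>d<r. f (q^2 * M + d) * e (\<alpha> * real (q^2 * M + d))) \<le> (\<Sum>d<r. norm (f (q^2 * M + d) * e (\<alpha> * real (q^2 * M + d))))"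
              by (rule norm_sum)
            also have "\<dots> = real r" by (simp add: norm_mult nf)
            finally show ?thesis .
          qed
          also have "norm (U f (q^2 * M) \<alpha>) = H \<alpha> * norm (U f M (q^2 * \<alpha>))"
            unfolding Uq2 H_def by (simp add: norm_mult)
          also have "H \<alpha> * norm (U f M (q^2 * \<alpha>)) \<le> R * (K * real M powr \<gamma> - L)"
          proof (rule mult_mono)
            show "H \<alpha> \<le> R" using Hmax[of \<alpha>] unfolding R_def by linarith
            show "norm (U f M (q^2 * \<alpha>)) \<le> K * real M powr \<gamma> - L" by (rule IH)
            show "0 \<le> R" using R1 by simp
            show "0 \<le> norm (U f M (q^2 * \<alpha>))" by simp
          qed
          finally have "norm (U f N \<alpha>) \<le> R * (K * real M powr \<gamma> - L) + real r" by simp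
          also have "\<dots> = K * (R * real M powr \<gamma>) - (R - 1) * L - L + real r" by (simp add: algebra_simps)
          also have "\<dots> \<le> K * real N powr \<gamma> - L"
          proof -
            have "K * (R * real M powr \<gamma>) \<le> K * real N powr \<gamma>"
              using MpN L0 q2 unfolding K_def by (intro mult_left_mono) auto
            then show ?thesis using RL rq by linarith
          qed
          finally show "norm (U f N \<alpha>) \<le> K * real N powr \<gamma> - L" .
        qed
      qed
    qed
    have "gelfond_type_order1 f"
      unfolding gelfond_type_order1_def
    proof (intro exI conjI allI impI)
      show "\<gamma> < 1" by (rule g1)
      fix N :: nat and \<alpha> :: real assume "N \<ge> 1"
      then have "norm (U f N \<alpha>) \<le> K * real N powr \<gamma> - L" using main by blast
      then show "norm (\<Sum>n<N. f n * e (\<alpha> * real n)) \<le> K * real N powr \<gamma>"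
        using L0 unfolding U_def by linarith
    qed
    then show ?thesis by blast
  next
    case False
    then have Hq: "H \<beta>0 = real q ^ 2" using Hle[of \<beta>0] by simp
    have nS1: "norm (S f q \<beta>0) \<le> q" and nS2: "norm (S f q (q * \<beta>0)) \<le> q"
      using norm_S_le[OF nf] by auto
    have eqq: "norm (S f q \<beta>0) = q \<and> norm (S f q (q * \<beta>0)) = q"
    proof (rule ccontr)
      assume "\<not> ?thesis"
      then have "norm (S f q \<beta>0) < q \<or> norm (S f q (q * \<beta>0)) < q" using nS1 nS2 by linarith
      then have "H \<beta>0 < real q * real q"
        unfolding H_def using nS1 nS2 by (intro prod_lt) auto
      then show False using Hq by (simp add: power2_eq_square)
    qed
    have one: "f d * e (b * real d) = 1" if "norm (S f q b) = q" "d < q" for b d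
    proof -
      have "f d * e (b * real d) = f 0 * e (b * real 0)"
        using all_eq_of_norm[of "\<lambda>d. f d * e (b * real d)" q] that q2
        by (simp add: norm_mult nf S_def)
      then show ?thesis using f0 by simp
    qed
    have d1: "1 < q" using q2 by simp
    have f11: "f 1 * e \<beta>0 = 1" and f12: "f 1 * e (q * \<beta>0) = 1"
      using one[of \<beta>0 1] one[of "q * \<beta>0" 1] eqq d1 by auto
    have f1nz: "f 1 \<noteq> 0" using nf[of 1] by auto
    have "f 1 * e \<beta>0 = f 1 * e (q * \<beta>0)" using f11 f12 by simp
    then have "e \<beta>0 = e (q * \<beta>0)" using f1nz by simp
    then have "e ((real q - 1) * \<beta>0) = 1"
      using e_add[of \<beta>0 "(real q - 1) * \<beta>0"] by (simp add: algebra_simps)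
    then obtain k :: int where k: "(real q - 1) * \<beta>0 = of_int k" using e_eq_1 by blast
    have allone: "f n * e (\<beta>0 * real n) = 1" for n
    proof (induction n rule: less_induct)
      case (less n)
      show ?case
      proof (cases "n < q")
        case True
        then show ?thesis using one[of \<beta>0 n] eqq by simp
      next
        case False
        define d where "d = n mod q"
        define m where "m = n div q"
        have nd: "n = d + q * m" unfolding d_def m_def by simp
        have dq: "d < q" unfolding d_def using q2 by simp
        have mn: "m < n" unfolding m_def using False q2 by (intro div_less_dividend) auto
        have kk: "\<beta>0 * real q = \<beta>0 + of_int k" using k by (simp add: algebra_simps)
        have "\<beta>0 * real n = \<beta>0 * real d + (\<beta>0 * real q) * real m" unfolding nd by (simp add: algebra_simps)
        also have "\<dots> = \<beta>0 * real d + \<beta>0 * real m + of_int (k * int m)" unfolding kk by (simp add: algebra_simps)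
        finally have "\<beta>0 * real n = \<beta>0 * real d + \<beta>0 * real m + of_int (k * int m)" .
        then have "e (\<beta>0 * real n) = e (\<beta>0 * real d) * e (\<beta>0 * real m)"
          by (simp only: e_add e_int mult_1_right)
        moreover have "f n = f d * f m" unfolding nd using fdig[OF dq] .
        ultimately have "f n * e (\<beta>0 * real n) = (f d * e (\<beta>0 * real d)) * (f m * e (\<beta>0 * real m))"
          by (simp add: algebra_simps)
        then show ?thesis using one[of \<beta>0 d] eqq dq less.IH[OF mn] by simp
      qed
    qed
    define p where "p = nat ((- k) mod int (q - 1))"
    have qm1: "int (q - 1) > 0" using q2 by simp
    have pl: "p < q - 1" unfolding p_def using qm1
      using pos_mod_bound[OF qm1, of "- k"] pos_mod_sign[OF qm1, of "- k"] by (simp add: nat_less_iff)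
    have "int p = (- k) mod int (q - 1)" unfolding p_def using qm1 by simp
    moreover have "(- k) div int (q - 1) * int (q - 1) + (- k) mod int (q - 1) = - k" by (rule div_mult_mod_eq)
    ultimately have "int p + k = - ((- k) div int (q - 1) * int (q - 1))" by linarith
    then have "int p + k = int (q - 1) * (- ((- k) div int (q - 1)))" by (metis mult.commute mult_minus_right)
    then obtain j :: int where pj: "int p + k = int (q - 1) * j" by blast
    have rq1: "real (q - 1) = real q - 1" using q2 by simp
    have "\<forall>n. f n = e (real n * real p / real (q - 1))"
    proof
      fix n
      have qn0: "real (q - 1) \<noteq> 0" using q2 by simp
      have b0eq: "\<beta>0 = real_of_int k / real (q - 1)" using k rq1 qn0 by (simp add: field_simps)
      have "real n * real p / real (q - 1) + \<beta>0 * real n = real n * (real p + real_of_int k) / real (q - 1)"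
        unfolding b0eq using div_aux[OF qn0] by simp
      also have "\<dots> = of_int (int n * j)"
      proof -
        have "real p + real_of_int k = real (q - 1) * of_int j" using arg_cong[OF pj, of real_of_int] by simp
        then show ?thesis using qn0 by simp
      qed
      finally have "e (real n * real p / real (q - 1)) * e (\<beta>0 * real n) = 1"
        by (simp only: e_add[symmetric] e_int)
      then show "f n = e (real n * real p / real (q - 1))"
        using allone[of n] by (metis e_nonzero mult_cancel_right)
    qed
    then show ?thesis using pl by blast
  qed
qed

end
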